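(* Let $C$ be a subring of a ring $D$ (with the same identity). Then $R[D,C]$ is weakly $r$-clean if and only if $D$ is $r$-clean and $C$ is weakly $r$-clean.
   Context: Rings are associative with identity. For a subring $C$ of $D$, $R[D,C]$ is the ring of all sequences $(a_1,a_2,\dots,a_n,c,c,c,\dots)$ with $n\ge1$, $a_i\in D$, $c\in C$ (i.e. sequences in $D$ that are eventually constant with constant value in $C$), with componentwise addition and multiplication. $Idem(R)$ denotes idempotents and $Reg(R)=\{r: r=ryr \text{ for some } y\in R\}$ regular elements. A ring is $r$-clean if every element is $r+e$ with $r\in Reg$, $e\in Idem$; an element is weakly $r$-clean if it equals $r+e$ or $r-e$ with $r\in Reg$, $e\in Idem$, and a ring is weakly $r$-clean if all its elements are. *)

theory Defs
  imports Main "HOL-Library.Function_Algebras"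
begin

text \<open>Rings: associative with identity, type class {ring, monoid_mult} (zero ring allowed).
  Ring-theoretic notions are taken relative to a carrier set S (a subring of the ambient type).\<close>

definition is_subring :: "'a::{ring,monoid_mult} set \<Rightarrow> bool" where
  "is_subring C \<longleftrightarrow> 1 \<in> C \<and> 0 \<in> C \<and> (\<forall>x\<in>C. \<forall>y\<in>C. x + y \<in> C \<and> x - y \<in> C \<and> x * y \<in> C) \<and> (\<forall>x\<in>C. - x \<in> C)"

definition Idem_in :: "'a::{ring,monoid_mult} set \<Rightarrow> 'a set" where
  "Idem_in S = {e \<in> S. e * e = e}"

definition Reg_in :: "'a::{ring,monoid_mult} set \<Rightarrow> 'a set" where
  "Reg_in S = {r \<in> S. \<exists>y\<in>S. r = r * y * r}"

definition r_clean :: "'a::{ring,monoid_mult} set \<Rightarrow> bool" where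
  "r_clean S \<longleftrightarrow> (\<forall>x\<in>S. \<exists>r\<in>Reg_in S. \<exists>e\<in>Idem_in S. x = r + e)"

definition weakly_r_clean :: "'a::{ring,monoid_mult} set \<Rightarrow> bool" where
  "weakly_r_clean S \<longleftrightarrow> (\<forall>x\<in>S. \<exists>r\<in>Reg_in S. \<exists>e\<in>Idem_in S. x = r + e \<or> x = r - e)"

text \<open>R[D,C] with D = UNIV: sequences (indexed from 0) in D that are eventually constant
  with constant value in C; ring operations are pointwise (Function_Algebras).\<close>
definition RDC :: "'a::{ring,monoid_mult} set \<Rightarrow> (nat \<Rightarrow> 'a) set" where
  "RDC C = {f. \<exists>n. \<exists>c\<in>C. \<forall>i\<ge>n. f i = c}"

end

theory Submission
  imports Defs
begin

lemma fun_pt: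
  fixes f g :: "nat \<Rightarrow> 'a::{ring,monoid_mult}"
  shows "(f * g) i = f i * g i" "(f + g) i = f i + g i" "(f - g) i = f i - g i"
  by (simp_all add: times_fun_def plus_fun_def fun_diff_def)

lemma RDC_elim:
  assumes "f \<in> RDC C"
  obtains n c where "c \<in> C" "\<And>i. i \<ge> n \<Longrightarrow> f i = c"
  using assms unfolding RDC_def by blast

lemma RDC_intro:
  assumes "c \<in> C" "\<And>i. i \<ge> n \<Longrightarrow> f i = c"
  shows "f \<in> RDC C"
  using assms unfolding RDC_def by blast

lemma fwd_C:
  fixes C :: "'a::{ring,monoid_mult} set"
  assumes w: "weakly_r_clean (RDC C)"
  shows "weakly_r_clean C"
  unfolding weakly_r_clean_def
proof
  fix c assume c: "c \<in> C"
  have "(\<lambda>_. c) \<in> RDC C" by (rule RDC_intro[of c C 0]) (use c in auto)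
  then obtain r e where r: "r \<in> Reg_in (RDC C)" and e: "e \<in> Idem_in (RDC C)"
    and x: "(\<lambda>_. c) = r + e \<or> (\<lambda>_. c) = r - e"
    using w unfolding weakly_r_clean_def by blast
  from r obtain y where rR: "r \<in> RDC C" and yR: "y \<in> RDC C" and ry: "r = r * y * r"
    unfolding Reg_in_def by blast
  from e have eR: "e \<in> RDC C" and ee: "e * e = e" unfolding Idem_in_def by auto
  obtain n1 c1 where c1: "c1 \<in> C" "\<And>i. i \<ge> n1 \<Longrightarrow> r i = c1" using rR unfolding RDC_def by blast
  obtain n2 c2 where c2: "c2 \<in> C" "\<And>i. i \<ge> n2 \<Longrightarrow> y i = c2" using yR unfolding RDC_def by blast
  obtain n3 c3 where c3: "c3 \<in> C" "\<And>i. i \<ge> n3 \<Longrightarrow> e i = c3" using eR unfolding RDC_def by blast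
  define i where "i = n1 + n2 + n3"
  have ri: "r i = c1" "y i = c2" "e i = c3" using c1 c2 c3 unfolding i_def by auto
  have "r i = r i * y i * r i" by (metis ry fun_pt(1))
  hence reg: "c1 \<in> Reg_in C" using c1 c2 ri unfolding Reg_in_def by auto
  have "e i * e i = e i" by (metis ee fun_pt(1))
  hence idm: "c3 \<in> Idem_in C" using c3 ri unfolding Idem_in_def by auto
  have "c = c1 + c3 \<or> c = c1 - c3"
    using x ri by (metis fun_pt(2,3))
  thus "\<exists>r\<in>Reg_in C. \<exists>e\<in>Idem_in C. c = r + e \<or> c = r - e" using reg idm by blast
qed

lemma fwd_D:
  fixes C :: "'a::{ring,monoid_mult} set"
  assumes sub: "is_subring C" and w: "weakly_r_clean (RDC C)"
  shows "r_clean (UNIV :: 'a set)"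
  unfolding r_clean_def
proof
  fix d :: 'a
  define x :: "nat \<Rightarrow> 'a" where "x = (\<lambda>i. if i = 0 then d else if i = 1 then - d else 0)"
  have "x \<in> RDC C" by (rule RDC_intro[of 0 C 2]) (use sub in \<open>auto simp: is_subring_def x_def\<close>)
  then obtain r e where r: "r \<in> Reg_in (RDC C)" and e: "e \<in> Idem_in (RDC C)"
    and xx: "x = r + e \<or> x = r - e"
    using w unfolding weakly_r_clean_def by blast
  from r obtain y where ry: "r = r * y * r"
    unfolding Reg_in_def by blast
  from e have ee: "e * e = e" unfolding Idem_in_def by auto
  have rp: "\<And>i. r i = r i * y i * r i" by (metis ry fun_pt(1))
  have ep: "\<And>i. e i * e i = e i" by (metis ee fun_pt(1))
  show "\<exists>r\<in>Reg_in UNIV. \<exists>e\<in>Idem_in UNIV. d = r + e"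
  proof (cases "x = r + e")
    case True
    hence "x 0 = r 0 + e 0" by (simp add: fun_pt)
    hence "d = r 0 + e 0" by (simp add: x_def)
    moreover have "r 0 \<in> Reg_in UNIV" using rp unfolding Reg_in_def by blast
    moreover have "e 0 \<in> Idem_in UNIV" using ep unfolding Idem_in_def by blast
    ultimately show ?thesis by blast
  next
    case False
    hence "x = r - e" using xx by blast
    hence "x 1 = r 1 - e 1" by (simp add: fun_pt)
    hence "d = - r 1 + e 1" by (simp add: x_def) (metis add.commute diff_conv_add_uminus minus_diff_eq minus_minus)
    moreover have "- r 1 = (- r 1) * (- y 1) * (- r 1)" using rp[of 1] by simp
    hence "- r 1 \<in> Reg_in UNIV" unfolding Reg_in_def by blast
    moreover have "e 1 \<in> Idem_in UNIV" using ep unfolding Idem_in_def by blast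
    ultimately show ?thesis by blast
  qed
qed

lemma bwd:
  fixes C :: "'a::{ring,monoid_mult} set"
  assumes D: "r_clean (UNIV :: 'a set)" and w: "weakly_r_clean C"
  shows "weakly_r_clean (RDC C)"
  unfolding weakly_r_clean_def
proof
  fix x assume "x \<in> RDC C"
  then obtain n c where c: "c \<in> C" and xc: "\<And>i. i \<ge> n \<Longrightarrow> x i = c" unfolding RDC_def by blast
  obtain r0 e0 where r0: "r0 \<in> Reg_in C" and e0: "e0 \<in> Idem_in C"
    and ce: "c = r0 + e0 \<or> c = r0 - e0" using w c unfolding weakly_r_clean_def by blast
  obtain y0 where y0: "y0 \<in> C" "r0 = r0 * y0 * r0" "r0 \<in> C" using r0 unfolding Reg_in_def by blast
  have e0C: "e0 \<in> C" "e0 * e0 = e0" using e0 unfolding Idem_in_def by auto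
  have "\<forall>d::'a. \<exists>t. d = fst t + snd (snd t) \<and> fst t = fst t * fst (snd t) * fst t
      \<and> snd (snd t) * snd (snd t) = snd (snd t)"
  proof
    fix d :: 'a
    obtain r e where "r \<in> Reg_in UNIV" "e \<in> Idem_in UNIV" "d = r + e"
      using D unfolding r_clean_def by blast
    then obtain y where "r = r * y * r" "e * e = e" "d = r + e"
      unfolding Reg_in_def Idem_in_def by blast
    thus "\<exists>t. d = fst t + snd (snd t) \<and> fst t = fst t * fst (snd t) * fst t
      \<and> snd (snd t) * snd (snd t) = snd (snd t)" by (intro exI[of _ "(r, y, e)"]) simp
  qed
  then obtain T where T: "\<And>d::'a. d = fst (T d) + snd (snd (T d))"
    "\<And>d. fst (T d) = fst (T d) * fst (snd (T d)) * fst (T d)"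
    "\<And>d. snd (snd (T d)) * snd (snd (T d)) = snd (snd (T d))" by metis
  show "\<exists>r\<in>Reg_in (RDC C). \<exists>e\<in>Idem_in (RDC C). x = r + e \<or> x = r - e"
  proof (cases "c = r0 + e0")
    case True
    define R where "R = (\<lambda>i. if i < n then fst (T (x i)) else r0)"
    define Y where "Y = (\<lambda>i. if i < n then fst (snd (T (x i))) else y0)"
    define E where "E = (\<lambda>i. if i < n then snd (snd (T (x i))) else e0)"
    have RR: "R \<in> RDC C" by (rule RDC_intro[of r0 C n]) (auto simp: R_def y0(3))
    have YR: "Y \<in> RDC C" by (rule RDC_intro[of y0 C n]) (auto simp: Y_def y0(1))
    have ER: "E \<in> RDC C" by (rule RDC_intro[of e0 C n]) (auto simp: E_def e0C)
    have "R = R * Y * R"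
    proof (rule ext)
      fix i show "R i = (R * Y * R) i"
        using T(2)[of "x i"] y0(2) by (auto simp: fun_pt R_def Y_def)
    qed
    hence "R \<in> Reg_in (RDC C)" using RR YR unfolding Reg_in_def by blast
    moreover have "E * E = E" by (rule ext) (auto simp: fun_pt E_def T(3) e0C)
    hence "E \<in> Idem_in (RDC C)" using ER unfolding Idem_in_def by blast
    moreover have "x = R + E"
    proof (rule ext)
      fix i show "x i = (R + E) i"
        using T(1)[of "x i"] xc[of i] True by (auto simp: fun_pt R_def E_def)
    qed
    ultimately show ?thesis by blast
  next
    case False
    hence cm: "c = r0 - e0" using ce by blast
    define R where "R = (\<lambda>i. if i < n then - fst (T (- x i)) else r0)"
    define Y where "Y = (\<lambda>i. if i < n then - fst (snd (T (- x i))) else y0)"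
    define E where "E = (\<lambda>i. if i < n then snd (snd (T (- x i))) else e0)"
    have RR: "R \<in> RDC C" by (rule RDC_intro[of r0 C n]) (auto simp: R_def y0(3))
    have YR: "Y \<in> RDC C" by (rule RDC_intro[of y0 C n]) (auto simp: Y_def y0(1))
    have ER: "E \<in> RDC C" by (rule RDC_intro[of e0 C n]) (auto simp: E_def e0C)
    have "R = R * Y * R"
    proof (rule ext)
      fix i show "R i = (R * Y * R) i"
        using T(2)[of "- x i"] y0(2) by (auto simp: fun_pt R_def Y_def)
    qed
    hence "R \<in> Reg_in (RDC C)" using RR YR unfolding Reg_in_def by blast
    moreover have "E * E = E" by (rule ext) (auto simp: fun_pt E_def T(3) e0C)
    hence "E \<in> Idem_in (RDC C)" using ER unfolding Idem_in_def by blast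
    moreover have "x = R - E"
    proof (rule ext)
      fix i
      have "- x i = fst (T (- x i)) + snd (snd (T (- x i)))" by (rule T(1))
      hence "x i = - fst (T (- x i)) - snd (snd (T (- x i)))"
        by (metis minus_add_distrib minus_minus diff_conv_add_uminus)
      thus "x i = (R - E) i"
        using xc[of i] cm by (auto simp: fun_pt R_def E_def)
    qed
    ultimately show ?thesis by blast
  qed
qed

theorem proposition2p13:
  fixes C :: "'a::{ring,monoid_mult} set"
  assumes "is_subring C"
  shows "weakly_r_clean (RDC C) \<longleftrightarrow> r_clean (UNIV :: 'a set) \<and> weakly_r_clean C"
  using fwd_C fwd_D bwd assms by blast

end
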